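(* Let $\mathcal G$ be a doubly connected molecular graph in which there is at least one edge joining an internal molecule to an external molecule. Then for any two isolated subsets of molecules $\mathbf M_1$ and $\mathbf M_2$ of $\mathcal G$, either $\mathbf M_1\subseteq \mathbf M_2$, or $\mathbf M_2\subseteq \mathbf M_1$, or $\mathbf M_1\cap \mathbf M_2=\emptyset$.
   Context: A molecular graph here is a finite multigraph whose vertices are called molecules; the molecules are partitioned into internal molecules and external molecules. Each edge joins two distinct molecules and has a type: it is a diffusive edge, a blue solid edge, or an edge of some other type (e.g. a dotted edge); parallel edges are allowed. The subgraph consisting of the internal molecules and the edges between them is doubly connected if there exist two disjoint sets of edges, $\mathcal B_{black}$ consisting only of diffusive edges between internal molecules and $\mathcal B_{blue}$ consisting only of blue solid or diffusive edges between internal molecules, such that each of $\mathcal B_{black}$ and $\mathcal B_{blue}$ contains a spanning tree of the set of all internal molecules. The molecular graph $\mathcal G$ is called doubly connected if this internal subgraph is doubly connected (the spanning trees need not contain the external molecules). A (nonempty) subset $\mathbf M$ of internal molecules is called isolated if the total number of edges of $\mathcal G$ (of any type) joining a molecule of $\mathbf M$ to a molecule of $\mathbf M^c$ is exactly two, where $\mathbf M^c$ consists of all internal molecules not in $\mathbf M$ together with all external molecules. *)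

theory Defs
  imports Main
begin

datatype edge_type = Diffusive | BlueSolid | OtherType nat

text \<open>Edges are abstract identifiers (so parallel edges are allowed); each edge has a
  pair of endpoints (unordered in meaning) and a type.\<close>
record ('v, 'e) molgraph =
  internal :: "'v set"
  external :: "'v set"
  edges    :: "'e set"
  ends     :: "'e \<Rightarrow> 'v \<times> 'v"
  etype    :: "'e \<Rightarrow> edge_type"

definition molecules :: "('v, 'e) molgraph \<Rightarrow> 'v set" where
  "molecules G = internal G \<union> external G"

definition wf_molgraph :: "('v, 'e) molgraph \<Rightarrow> bool" where
  "wf_molgraph G \<longleftrightarrow>
     finite (internal G) \<and> finite (external G) \<and> finite (edges G) \<and>
     internal G \<inter> external G = {} \<and>
     (\<forall>e\<in>edges G. fst (ends G e) \<in> molecules G \<and> snd (ends G e) \<in> molecules G \<and>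
                   fst (ends G e) \<noteq> snd (ends G e))"

definition joins :: "('v, 'e) molgraph \<Rightarrow> 'e \<Rightarrow> 'v set \<Rightarrow> 'v set \<Rightarrow> bool" where
  "joins G e A B \<longleftrightarrow>
     (fst (ends G e) \<in> A \<and> snd (ends G e) \<in> B) \<or> (snd (ends G e) \<in> A \<and> fst (ends G e) \<in> B)"

definition edge_rel :: "('v, 'e) molgraph \<Rightarrow> 'e set \<Rightarrow> ('v \<times> 'v) set" where
  "edge_rel G T = {(u, v). \<exists>e\<in>T. ends G e = (u, v) \<or> ends G e = (v, u)}"

definition is_spanning_tree :: "('v, 'e) molgraph \<Rightarrow> 'v set \<Rightarrow> 'e set \<Rightarrow> bool" where
  "is_spanning_tree G V T \<longleftrightarrow>
     finite T \<and>
     (\<forall>e\<in>T. fst (ends G e) \<in> V \<and> snd (ends G e) \<in> V) \<and>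
     (\<forall>u\<in>V. \<forall>v\<in>V. (u, v) \<in> (edge_rel G T)\<^sup>*) \<and>
     card T + 1 = card V"

definition contains_spanning_tree :: "('v, 'e) molgraph \<Rightarrow> 'v set \<Rightarrow> 'e set \<Rightarrow> bool" where
  "contains_spanning_tree G V B \<longleftrightarrow> (\<exists>T\<subseteq>B. is_spanning_tree G V T)"

definition internal_edge :: "('v, 'e) molgraph \<Rightarrow> 'e \<Rightarrow> bool" where
  "internal_edge G e \<longleftrightarrow> e \<in> edges G \<and> fst (ends G e) \<in> internal G \<and> snd (ends G e) \<in> internal G"

definition doubly_connected :: "('v, 'e) molgraph \<Rightarrow> bool" where
  "doubly_connected G \<longleftrightarrow>
     (\<exists>Bblack Bblue.
        Bblack \<inter> Bblue = {} \<and>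
        (\<forall>e\<in>Bblack. internal_edge G e \<and> etype G e = Diffusive) \<and>
        (\<forall>e\<in>Bblue. internal_edge G e \<and> (etype G e = BlueSolid \<or> etype G e = Diffusive)) \<and>
        contains_spanning_tree G (internal G) Bblack \<and>
        contains_spanning_tree G (internal G) Bblue)"

definition isolated :: "('v, 'e) molgraph \<Rightarrow> 'v set \<Rightarrow> bool" where
  "isolated G M \<longleftrightarrow>
     M \<noteq> {} \<and> M \<subseteq> internal G \<and>
     card {e \<in> edges G. joins G e M ((internal G - M) \<union> external G)} = 2"

end

theory Submission
  imports Defs
begin

definition crosses :: "('v, 'e) molgraph \<Rightarrow> 'e \<Rightarrow> 'v set \<Rightarrow> bool" where
  "crosses G e S \<longleftrightarrow> (fst (ends G e) \<in> S \<and> snd (ends G e) \<notin> S) \<or> (snd (ends G e) \<in> S \<and> fst (ends G e) \<notin> S)"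

lemma cross_exists:
  assumes "(u,v) \<in> (edge_rel G T)\<^sup>*" "u \<in> S" "v \<notin> S"
  shows "\<exists>e\<in>T. crosses G e S"
  using assms
proof (induction rule: rtrancl_induct)
  case base then show ?case by simp
next
  case (step y z)
  show ?case
  proof (cases "y \<in> S")
    case True
    from step.hyps(2) obtain e where "e\<in>T" "ends G e = (y,z) \<or> ends G e = (z,y)"
      by (auto simp: edge_rel_def)
    then show ?thesis using True step.prems unfolding crosses_def by force
  next
    case False then show ?thesis using step.IH step.prems by blast
  qed
qed

lemma tree_cross:
  assumes "is_spanning_tree G V T" "s \<in> S" "S \<subseteq> V" "t \<in> V" "t \<notin> S"
  shows "\<exists>e\<in>T. crosses G e S"
proof -
  have "(s,t) \<in> (edge_rel G T)\<^sup>*" using assms unfolding is_spanning_tree_def by blast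
  then show ?thesis using cross_exists assms by metis
qed

lemma fin:
  fixes p1 q1 p2 q2 :: 'v
  assumes "p1 \<in> I" "q1 \<in> I" "p2 \<in> I" "q2 \<in> I"
  and "(p1 \<in> M1 \<and> q1 \<notin> M1) \<or> (q1 \<in> M1 \<and> p1 \<notin> M1)"
  and "(p2 \<in> M2 \<and> q2 \<notin> M2) \<or> (q2 \<in> M2 \<and> p2 \<notin> M2)"
  and "(p1 = p2 \<and> q1 = q2) \<or> (\<not> ((p1 \<in> M2 \<and> q1 \<notin> M2) \<or> (q1 \<in> M2 \<and> p1 \<notin> M2)) \<and>
     \<not> ((p2 \<in> M1 \<and> q2 \<notin> M1) \<or> (q2 \<in> M1 \<and> p2 \<notin> M1)))"
  and "\<And>S. S \<in> {M1 \<inter> M2, M1 - M2, M2 - M1, I - (M1 \<union> M2)} \<Longrightarrow> (p1 \<in> S \<and> q1 \<notin> S) \<or> (q1 \<in> S \<and> p1 \<notin> S) \<or> (p2 \<in> S \<and> q2 \<notin> S) \<or> (q2 \<in> S \<and> p2 \<notin> S)"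
  shows False
proof -
  have A: "(p1 \<in> M1 \<inter> M2 \<and> q1 \<notin> M1 \<inter> M2) \<or> (q1 \<in> M1 \<inter> M2 \<and> p1 \<notin> M1 \<inter> M2) \<or> (p2 \<in> M1 \<inter> M2 \<and> q2 \<notin> M1 \<inter> M2) \<or> (q2 \<in> M1 \<inter> M2 \<and> p2 \<notin> M1 \<inter> M2)" using assms(8) by blast
  have D: "(p1 \<in> I - (M1 \<union> M2) \<and> q1 \<notin> I - (M1 \<union> M2)) \<or> (q1 \<in> I - (M1 \<union> M2) \<and> p1 \<notin> I - (M1 \<union> M2)) \<or> (p2 \<in> I - (M1 \<union> M2) \<and> q2 \<notin> I - (M1 \<union> M2)) \<or> (q2 \<in> I - (M1 \<union> M2) \<and> p2 \<notin> I - (M1 \<union> M2))" using assms(8) by blast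
  have B: "(p1 \<in> (M1 - M2) \<and> q1 \<notin> (M1 - M2)) \<or> (q1 \<in> (M1 - M2) \<and> p1 \<notin> (M1 - M2)) \<or> (p2 \<in> (M1 - M2) \<and> q2 \<notin> (M1 - M2)) \<or> (q2 \<in> (M1 - M2) \<and> p2 \<notin> (M1 - M2))" using assms(8) by blast
  have C: "(p1 \<in> (M2 - M1) \<and> q1 \<notin> (M2 - M1)) \<or> (q1 \<in> (M2 - M1) \<and> p1 \<notin> (M2 - M1)) \<or> (p2 \<in> (M2 - M1) \<and> q2 \<notin> (M2 - M1)) \<or> (q2 \<in> (M2 - M1) \<and> p2 \<notin> (M2 - M1))" using assms(8) by blast
  show False using A B C D assms(1-7) by auto
qed

theorem claim5p3:
  fixes G :: "('v, 'e) molgraph" and M1 M2 :: "'v set"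
  assumes "wf_molgraph G"
    and "doubly_connected G"
    and "\<exists>e\<in>edges G. joins G e (internal G) (external G)"
    and "isolated G M1"
    and "isolated G M2"
  shows "M1 \<subseteq> M2 \<or> M2 \<subseteq> M1 \<or> M1 \<inter> M2 = {}"
proof (rule ccontr)
  assume nc: "\<not> (M1 \<subseteq> M2 \<or> M2 \<subseteq> M1 \<or> M1 \<inter> M2 = {})"
  then obtain a b c where a: "a\<in>M1" "a\<in>M2" and b: "b\<in>M1" "b\<notin>M2" and c: "c\<in>M2" "c\<notin>M1"
    by blast
  define I where "I = internal G"
  define X where "X = external G"
  have IX: "I \<inter> X = {}" and finE: "finite (edges G)"
    using assms(1) unfolding wf_molgraph_def I_def X_def by auto
  have M1I: "M1 \<subseteq> I" and M2I: "M2 \<subseteq> I"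
    using assms(4,5) unfolding isolated_def I_def by auto
  obtain Bk Bb where disj: "Bk \<inter> Bb = {}"
    and Bk: "\<forall>e\<in>Bk. internal_edge G e" and Bb: "\<forall>e\<in>Bb. internal_edge G e"
    and Tk0: "contains_spanning_tree G I Bk" and Tb0: "contains_spanning_tree G I Bb"
    using assms(2) unfolding doubly_connected_def I_def by blast
  obtain Tk where TkB: "Tk \<subseteq> Bk" and Tk: "is_spanning_tree G I Tk"
    using Tk0 unfolding contains_spanning_tree_def by blast
  obtain Tb where TbB: "Tb \<subseteq> Bb" and Tb: "is_spanning_tree G I Tb"
    using Tb0 unfolding contains_spanning_tree_def by blast
  define E1 where "E1 = {e \<in> edges G. joins G e M1 ((I - M1) \<union> X)}"
  define E2 where "E2 = {e \<in> edges G. joins G e M2 ((I - M2) \<union> X)}"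
  have cE1: "card E1 = 2" using assms(4) unfolding isolated_def E1_def I_def X_def by simp
  have cE2: "card E2 = 2" using assms(5) unfolding isolated_def E2_def I_def X_def by simp
  have intI: "fst (ends G e) \<in> I \<and> snd (ends G e) \<in> I \<and> e \<in> edges G" if "e \<in> Bk \<union> Bb" for e
    using that Bk Bb unfolding internal_edge_def I_def by blast
  have inE1: "e \<in> E1" if "e \<in> Bk \<union> Bb" "crosses G e M1" for e
    using intI[OF that(1)] that(2) unfolding E1_def joins_def crosses_def by auto
  have inE2: "e \<in> E2" if "e \<in> Bk \<union> Bb" "crosses G e M2" for e
    using intI[OF that(1)] that(2) unfolding E2_def joins_def crosses_def by auto
  have aI: "a \<in> I" and bI: "b \<in> I" and cI: "c \<in> I" using a b c M1I M2I by auto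
  obtain k1 where k1: "k1 \<in> Tk" "crosses G k1 M1" using tree_cross[OF Tk b(1) M1I cI c(2)] by blast
  obtain b1 where b1: "b1 \<in> Tb" "crosses G b1 M1" using tree_cross[OF Tb b(1) M1I cI c(2)] by blast
  obtain k2 where k2: "k2 \<in> Tk" "crosses G k2 M2" using tree_cross[OF Tk c(1) M2I bI b(2)] by blast
  obtain b2 where b2: "b2 \<in> Tb" "crosses G b2 M2" using tree_cross[OF Tb c(1) M2I bI b(2)] by blast
  have k1B: "k1 \<in> Bk" "k2 \<in> Bk" "b1 \<in> Bb" "b2 \<in> Bb" using k1 k2 b1 b2 TkB TbB by auto
  have ne: "k1 \<noteq> b1" "k2 \<noteq> b2" "k1 \<noteq> b2" "k2 \<noteq> b1" using k1B disj by auto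
  have E1eq: "E1 = {k1, b1}"
  proof -
    have "{k1,b1} \<subseteq> E1" using inE1 k1 b1 k1B by auto
    moreover have "finite E1" using finE unfolding E1_def by simp
    moreover have "card {k1,b1} = 2" using ne by simp
    ultimately show ?thesis using cE1 by (metis card_subset_eq)
  qed
  have E2eq: "E2 = {k2, b2}"
  proof -
    have "{k2,b2} \<subseteq> E2" using inE2 k2 b2 k1B by auto
    moreover have "finite E2" using finE unfolding E2_def by simp
    moreover have "card {k2,b2} = 2" using ne by simp
    ultimately show ?thesis using cE2 by (metis card_subset_eq)
  qed
  obtain x where x: "x \<in> edges G" "joins G x I X" using assms(3) unfolding I_def X_def by blast
  have xI: "fst (ends G x) \<in> I \<and> snd (ends G x) \<in> I" if "x \<in> Bk \<union> Bb"
    using intI that by blast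
  have xn: "x \<notin> E1 \<union> E2"
  proof
    assume "x \<in> E1 \<union> E2"
    then have "x \<in> Bk \<union> Bb" using E1eq E2eq k1B by auto
    then have "fst (ends G x) \<in> I \<and> snd (ends G x) \<in> I" by (rule xI)
    then show False using x(2) IX unfolding joins_def by blast
  qed
  obtain d where d: "d \<in> I" "d \<notin> M1" "d \<notin> M2"
  proof (cases "fst (ends G x) \<in> I \<and> snd (ends G x) \<in> X")
    case True
    have "fst (ends G x) \<notin> M1" using xn x(1) True unfolding E1_def joins_def by auto
    moreover have "fst (ends G x) \<notin> M2" using xn x(1) True unfolding E2_def joins_def by auto
    ultimately show ?thesis using that True by blast
  next
    case False
    then have F: "snd (ends G x) \<in> I \<and> fst (ends G x) \<in> X" using x(2) unfolding joins_def by blast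
    have "snd (ends G x) \<notin> M1" using xn x(1) F unfolding E1_def joins_def by auto
    moreover have "snd (ends G x) \<notin> M2" using xn x(1) F unfolding E2_def joins_def by auto
    ultimately show ?thesis using that F by blast
  qed
  have blk: "e = k1 \<or> e = k2" if "e \<in> Tk" "crosses G e M1 \<or> crosses G e M2" for e
  proof -
    have "e \<in> Bk" using that TkB by auto
    then have "e \<in> E1 \<union> E2" using inE1 inE2 that by auto
    then show ?thesis using E1eq E2eq \<open>e \<in> Bk\<close> k1B disj by auto
  qed
  have ends_k: "fst (ends G e) \<in> I \<and> snd (ends G e) \<in> I" if "e \<in> Tk" for e
    using that TkB intI by auto
  have cr: "crosses G k1 S \<or> crosses G k2 S" if h: "s \<in> S" "S \<subseteq> I" "t \<in> I" "t \<notin> S"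
      and sub: "\<And>e. e \<in> Tk \<Longrightarrow> crosses G e S \<Longrightarrow> crosses G e M1 \<or> crosses G e M2" for S s t
  proof -
    obtain e where "e \<in> Tk" "crosses G e S" using tree_cross[OF Tk h] by blast
    then show ?thesis using blk sub by metis
  qed
  have cA: "crosses G k1 (M1 \<inter> M2) \<or> crosses G k2 (M1 \<inter> M2)"
    by (rule cr[of a _ b]) (use a b aI bI M1I ends_k in \<open>auto simp: crosses_def\<close>)
  have cB: "crosses G k1 (M1 - M2) \<or> crosses G k2 (M1 - M2)"
    by (rule cr[of b _ a]) (use a b aI bI M1I ends_k in \<open>auto simp: crosses_def\<close>)
  have cC: "crosses G k1 (M2 - M1) \<or> crosses G k2 (M2 - M1)"
    by (rule cr[of c _ a]) (use a c aI cI M2I ends_k in \<open>auto simp: crosses_def\<close>)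
  have cD: "crosses G k1 (I - (M1 \<union> M2)) \<or> crosses G k2 (I - (M1 \<union> M2))"
    by (rule cr[of d _ a]) (use a d aI M2I M1I ends_k in \<open>auto simp: crosses_def\<close>)
  have n12: "k1 = k2 \<or> (\<not> crosses G k1 M2 \<and> \<not> crosses G k2 M1)"
    using inE2 inE1 k1B E2eq E1eq ne by blast
  have e1: "fst (ends G k1) \<in> I" "snd (ends G k1) \<in> I" using ends_k k1 by auto
  have e2: "fst (ends G k2) \<in> I" "snd (ends G k2) \<in> I" using ends_k k2 by auto
  have n12': "(fst (ends G k1) = fst (ends G k2) \<and> snd (ends G k1) = snd (ends G k2)) \<or> (\<not> crosses G k1 M2 \<and> \<not> crosses G k2 M1)"
    using n12 by auto
  show False
  proof (rule fin[OF e1 e2])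
    show "(fst (ends G k1) \<in> M1 \<and> snd (ends G k1) \<notin> M1) \<or> (snd (ends G k1) \<in> M1 \<and> fst (ends G k1) \<notin> M1)"
      using k1(2) unfolding crosses_def by (simp only: disj_assoc)
    show "(fst (ends G k2) \<in> M2 \<and> snd (ends G k2) \<notin> M2) \<or> (snd (ends G k2) \<in> M2 \<and> fst (ends G k2) \<notin> M2)"
      using k2(2) unfolding crosses_def by (simp only: disj_assoc)
    show "(fst (ends G k1) = fst (ends G k2) \<and> snd (ends G k1) = snd (ends G k2)) \<or> (\<not> ((fst (ends G k1) \<in> M2 \<and> snd (ends G k1) \<notin> M2) \<or> (snd (ends G k1) \<in> M2 \<and> fst (ends G k1) \<notin> M2)) \<and>
     \<not> ((fst (ends G k2) \<in> M1 \<and> snd (ends G k2) \<notin> M1) \<or> (snd (ends G k2) \<in> M1 \<and> fst (ends G k2) \<notin> M1)))"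
      using n12' unfolding crosses_def by (simp only: disj_assoc)
    fix S assume "S \<in> {M1 \<inter> M2, M1 - M2, M2 - M1, I - (M1 \<union> M2)}"
    then show "(fst (ends G k1) \<in> S \<and> snd (ends G k1) \<notin> S) \<or> (snd (ends G k1) \<in> S \<and> fst (ends G k1) \<notin> S) \<or> (fst (ends G k2) \<in> S \<and> snd (ends G k2) \<notin> S) \<or> (snd (ends G k2) \<in> S \<and> fst (ends G k2) \<notin> S)"
      (is "?P S")
    proof -
      from \<open>S \<in> _\<close> consider "S = M1 \<inter> M2" | "S = M1 - M2" | "S = M2 - M1" | "S = I - (M1 \<union> M2)" by blast
      then show "?P S"
      proof cases
        case 1 show ?thesis unfolding 1 using cA unfolding crosses_def by (simp only: disj_assoc)
      next
        case 2 show ?thesis unfolding 2 using cB unfolding crosses_def by (simp only: disj_assoc)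
      next
        case 3 show ?thesis unfolding 3 using cC unfolding crosses_def by (simp only: disj_assoc)
      next
        case 4 show ?thesis unfolding 4 using cD unfolding crosses_def by (simp only: disj_assoc)
      qed
    qed
  qed
qed

end
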